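(* For every edge-set $F\subseteq E(H)$ with $|F|=\ell$, a tree embedding $(\mathcal T,\mathcal M,y)$ sampled from $\mathcal D$ is good for $F$ with probability at least $1/2$.
   Context: Standing setup. $G=(V,E)$ is an undirected graph with $n=|V|$, demand-pairs $(S_i,T_i)$, $i\in[q]$, of subsets of $V$. $\ell\ge1$ is an integer and $E_\ell\subseteq E$ an edge set such that in $(V,E_\ell)$ every $(S_i,T_i)$ is $\ell$-edge-connected. $x:E\to[0,1]$ satisfies $x_e=1$ for $e\in E_\ell$ and $\sum_{e\in\delta_G(X)}x_e\ge \ell+1$ for every $i\in[q]$ and every $X$ with $T_i\subseteq X\subseteq V\setminus S_i$ (here $\delta_G(X)$ is the set of edges of $G$ with exactly one endpoint in $X$; $x(F)=\sum_{e\in F}x_e$). $\beta\ge1$ is a real. $\mathsf{LARGE}=\{e: x_e\ge 1/(4\ell\beta)\}$, $\mathsf{SMALL}=E\setminus\mathsf{LARGE}$, and $H=(V,\mathsf{LARGE})$. Capacities: $\tilde x_e=1/(4\ell\beta)$ if $e\in\mathsf{LARGE}$; $\tilde x_e=0$ if $x_e<\frac{1}{2n^2}\cdot\frac1{4\ell\beta}$; $\tilde x_e=x_e$ otherwise. A tree embedding $(\mathcal T,\mathcal M,y)$ of $(G,\tilde x)$: $\mathcal T$ is a tree; $\mathcal M$ maps nodes of $\mathcal T$ to vertices of $G$ and is a bijection between leaves of $\mathcal T$ and $V$ (a vertex set of $G$ is identified with the corresponding leaf set); each tree edge $f=(u,v)$ is mapped to a path $\mathcal M(f)$ in $G$ between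 $\mathcal M(u)$ and $\mathcal M(v)$; $y(f)=\tilde x(\delta_G(X))$ where $(X,V\setminus X)$ is the leaf partition induced by $\mathcal T-f$. $\mathcal M^{-1}(e)=\{f: e\in\mathcal M(f)\}$, $\mathcal M^{-1}(F)=\bigcup_{e\in F}\mathcal M^{-1}(e)$, $\mathcal M(E')=\bigcup_{f\in E'}\mathcal M(f)$, $\mathsf{load}(e)=\sum_{f\in\mathcal M^{-1}(e)}y(f)$. $\mathcal D$ is a probability distribution over tree embeddings of $(G,\tilde x)$ with $\mathbb{E}_{\mathcal T\sim\mathcal D}[\mathsf{load}(e)]\le\beta\,\tilde x_e$ for every $e\in E$, and for every tree in its support and all disjoint $A,B\subseteq V$, the maximum $A$–$B$ flow in $\mathcal T$ under capacities $y$ is at least the maximum $A$–$B$ flow in $G$ under capacities $\tilde x$. A tree embedding $(\mathcal T,\mathcal M,y)$ is good for $F\subseteq E(H)$ if $y(\mathcal M^{-1}(F))=\sum_{f\in\mathcal M^{-1}(F)}y(f)\le1/2$. *)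

theory Defs
  imports "HOL-Probability.Probability"
begin

definition is_graph :: "'v set \<Rightarrow> 'v set set \<Rightarrow> bool" where
  "is_graph V E \<longleftrightarrow> finite V \<and> (\<forall>e\<in>E. \<exists>u v. e = {u, v} \<and> u \<noteq> v \<and> u \<in> V \<and> v \<in> V)"

definition dcut :: "'v set set \<Rightarrow> 'v set \<Rightarrow> 'v set set" where
  "dcut E X = {e \<in> E. card (e \<inter> X) = 1}"

definition adjrel :: "'a set set \<Rightarrow> ('a \<times> 'a) set" where
  "adjrel Es = {(u, v). {u, v} \<in> Es}"

definition edge_connected_pair :: "nat \<Rightarrow> 'v set \<Rightarrow> 'v set set \<Rightarrow> 'v set \<Rightarrow> 'v set \<Rightarrow> bool" where
  "edge_connected_pair k V Es S T \<longleftrightarrow>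
     (\<forall>X. T \<subseteq> X \<and> X \<subseteq> V - S \<longrightarrow> card (dcut Es X) \<ge> k)"

definition path_edges :: "'v list \<Rightarrow> 'v set set" where
  "path_edges p = set (map (\<lambda>(a, b). {a, b}) (zip p (tl p)))"

definition is_path :: "'v set set \<Rightarrow> 'v list \<Rightarrow> 'v \<Rightarrow> 'v \<Rightarrow> bool" where
  "is_path E p a b \<longleftrightarrow> p \<noteq> [] \<and> hd p = a \<and> last p = b \<and> distinct p \<and> path_edges p \<subseteq> E"

definition is_tree :: "'n set \<Rightarrow> 'n set set \<Rightarrow> bool" where
  "is_tree N TE \<longleftrightarrow> finite N \<and> N \<noteq> {}
     \<and> (\<forall>f\<in>TE. \<exists>u v. f = {u, v} \<and> u \<noteq> v \<and> u \<in> N \<and> v \<in> N)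
     \<and> (\<forall>u\<in>N. \<forall>v\<in>N. (u, v) \<in> (adjrel TE)\<^sup>*)
     \<and> \<not> (\<exists>cs. length cs \<ge> 3 \<and> distinct cs \<and> set cs \<subseteq> N \<and>
             (\<forall>i<length cs. {cs ! i, cs ! ((i + 1) mod length cs)} \<in> TE))"

definition leaves :: "'n set \<Rightarrow> 'n set set \<Rightarrow> 'n set" where
  "leaves N TE = {u \<in> N. card {f \<in> TE. u \<in> f} \<le> 1}"

definition side :: "'n set set \<Rightarrow> 'n set \<Rightarrow> 'n \<Rightarrow> 'n set" where
  "side TE f a = {w. (a, w) \<in> (adjrel (TE - {f}))\<^sup>*}"

record ('n, 'v) temb =
  tnodes :: "'n set"
  tedges :: "'n set set"
  tmap :: "'n \<Rightarrow> 'v"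
  tpath :: "'n set \<Rightarrow> 'v list"
  ty :: "'n set \<Rightarrow> real"

definition tree_embedding :: "'v set \<Rightarrow> 'v set set \<Rightarrow> ('v set \<Rightarrow> real) \<Rightarrow> ('n, 'v) temb \<Rightarrow> bool" where
  "tree_embedding V E c T \<longleftrightarrow>
     is_tree (tnodes T) (tedges T)
     \<and> tmap T ` tnodes T \<subseteq> V
     \<and> bij_betw (tmap T) (leaves (tnodes T) (tedges T)) V
     \<and> (\<forall>f\<in>tedges T. \<exists>u v. f = {u, v} \<and> is_path E (tpath T f) (tmap T u) (tmap T v))
     \<and> (\<forall>f\<in>tedges T. \<forall>a\<in>f.
          ty T f = sum c (dcut E (tmap T ` (leaves (tnodes T) (tedges T) \<inter> side (tedges T) f a))))"

definition Minv :: "('n, 'v) temb \<Rightarrow> 'v set set \<Rightarrow> 'n set set" where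
  "Minv T F = {f \<in> tedges T. \<exists>e\<in>F. e \<in> path_edges (tpath T f)}"

definition load :: "('n, 'v) temb \<Rightarrow> 'v set \<Rightarrow> real" where
  "load T e = (\<Sum>f\<in>Minv T {e}. ty T f)"

definition good :: "('n, 'v) temb \<Rightarrow> 'v set set \<Rightarrow> bool" where
  "good T F \<longleftrightarrow> (\<Sum>f\<in>Minv T F. ty T f) \<le> 1/2"

definition flow_feasible :: "'a set \<Rightarrow> 'a set set \<Rightarrow> ('a set \<Rightarrow> real) \<Rightarrow> 'a set \<Rightarrow> 'a set \<Rightarrow> ('a \<Rightarrow> 'a \<Rightarrow> real) \<Rightarrow> bool" where
  "flow_feasible Vs Es c A B g \<longleftrightarrow>
     (\<forall>u v. g u v = - g v u)
     \<and> (\<forall>u v. {u, v} \<notin> Es \<longrightarrow> g u v = 0)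
     \<and> (\<forall>u v. {u, v} \<in> Es \<longrightarrow> \<bar>g u v\<bar> \<le> c {u, v})
     \<and> (\<forall>w\<in>Vs - (A \<union> B). (\<Sum>u\<in>Vs. g w u) = 0)"

definition flow_value :: "'a set \<Rightarrow> 'a set \<Rightarrow> ('a \<Rightarrow> 'a \<Rightarrow> real) \<Rightarrow> real" where
  "flow_value Vs A g = (\<Sum>a\<in>A. \<Sum>u\<in>Vs. g a u)"

definition maxflow :: "'a set \<Rightarrow> 'a set set \<Rightarrow> ('a set \<Rightarrow> real) \<Rightarrow> 'a set \<Rightarrow> 'a set \<Rightarrow> real" where
  "maxflow Vs Es c A B = Sup {flow_value Vs A g | g. flow_feasible Vs Es c A B g}"

definition xtilde :: "'v set set \<Rightarrow> nat \<Rightarrow> nat \<Rightarrow> real \<Rightarrow> ('v set \<Rightarrow> real) \<Rightarrow> 'v set \<Rightarrow> real" where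
  "xtilde E n l \<beta> x e =
     (if e \<notin> E then 0
      else if x e \<ge> 1 / (4 * real l * \<beta>) then 1 / (4 * real l * \<beta>)
      else if x e < 1 / (2 * real n ^ 2) * (1 / (4 * real l * \<beta>)) then 0
      else x e)"

definition LARGE :: "'v set set \<Rightarrow> nat \<Rightarrow> real \<Rightarrow> ('v set \<Rightarrow> real) \<Rightarrow> 'v set set" where
  "LARGE E l \<beta> x = {e \<in> E. x e \<ge> 1 / (4 * real l * \<beta>)}"

end

theory Submission imports Defs begin
lemma Minv_insert: "Minv T (insert e F) = Minv T {e} \<union> Minv T F"
  unfolding Minv_def by auto
lemma Minv_sub: "Minv T F \<subseteq> tedges T" unfolding Minv_def by auto
lemma sum_Minv_le:
  fixes g :: "'n set \<Rightarrow> real"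
  assumes "finite F" "finite (tedges T)" "\<forall>f\<in>tedges T. 0 \<le> g f"
  shows "sum g (Minv T F) \<le> (\<Sum>e\<in>F. sum g (Minv T {e}))"
  using assms(1)
proof (induction F rule: finite_induct)
  case empty then show ?case by (simp add: Minv_def)
next
  case (insert e F)
  have fin: "finite (Minv T {e})" "finite (Minv T F)"
    by (rule finite_subset[OF Minv_sub assms(2)])+
  have "sum g (Minv T (insert e F)) = sum g (Minv T {e}) + sum g (Minv T F) - sum g (Minv T {e} \<inter> Minv T F)"
    unfolding Minv_insert[of T e F] by (rule sum_Un[OF fin])
  also have "\<dots> \<le> sum g (Minv T {e}) + sum g (Minv T F)"
  proof -
    have "\<forall>f\<in>Minv T {e} \<inter> Minv T F. 0 \<le> g f" using assms(3) Minv_sub by blast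
    then have "0 \<le> sum g (Minv T {e} \<inter> Minv T F)" by (intro sum_nonneg) blast
    then show ?thesis by linarith
  qed
  finally show ?case using insert by simp
qed

lemma xtilde_nonneg:
  assumes "\<forall>e\<in>E. 0 \<le> x e" "l \<ge> 1" "\<beta> \<ge> 1"
  shows "0 \<le> xtilde E n l \<beta> x e"
  using assms unfolding xtilde_def by (auto simp: zero_le_mult_iff)

lemma tree_fin: "is_tree N TE \<Longrightarrow> finite TE"
proof -
  assume a: "is_tree N TE"
  have c: "\<forall>f\<in>TE. \<exists>u v. f = {u, v} \<and> u \<noteq> v \<and> u \<in> N \<and> v \<in> N"
    using a[unfolded is_tree_def] by (elim conjE) assumption
  have "TE \<subseteq> Pow N"
  proof
    fix f assume "f \<in> TE"
    with c obtain u v where "f = {u, v}" "u \<in> N" "v \<in> N" by blast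
    then show "f \<in> Pow N" by simp
  qed
  moreover have "finite N" using a[unfolded is_tree_def] by (elim conjE) assumption
  ultimately show ?thesis by (meson finite_Pow_iff finite_subset)
qed

lemma ty_nonneg:
  assumes "tree_embedding V E c Tm" "\<forall>e. 0 \<le> c e" "f \<in> tedges Tm"
  shows "0 \<le> ty Tm f"
proof -
  have A: "\<forall>f\<in>tedges Tm. \<exists>u v. f = {u, v} \<and> is_path E (tpath Tm f) (tmap Tm u) (tmap Tm v)"
    using assms(1)[unfolded tree_embedding_def] by (elim conjE) assumption
  have B: "\<forall>f\<in>tedges Tm. \<forall>a\<in>f.
          ty Tm f = sum c (dcut E (tmap Tm ` (leaves (tnodes Tm) (tedges Tm) \<inter> side (tedges Tm) f a)))"
    using assms(1)[unfolded tree_embedding_def] by (elim conjE) assumption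
  from A assms(3) obtain u v where f: "f = {u,v}" by blast
  have "u \<in> f" using f by simp
  then have "ty Tm f = sum c (dcut E (tmap Tm ` (leaves (tnodes Tm) (tedges Tm) \<inter> side (tedges Tm) f u)))"
    using B assms(3) by blast
  also have "\<dots> \<ge> 0" using assms(2) by (simp add: sum_nonneg)
  finally show ?thesis .
qed

theorem lemma5p2:
  fixes V :: "'v set" and E El :: "'v set set"
    and q l :: nat and S T :: "nat \<Rightarrow> 'v set"
    and x :: "'v set \<Rightarrow> real" and \<beta> :: real
    and D :: "('n, 'v) temb pmf" and F :: "'v set set"
  assumes graph: "is_graph V E"
    and demands: "\<forall>i<q. S i \<subseteq> V \<and> T i \<subseteq> V"
    and l_pos: "l \<ge> 1"
    and El_sub: "El \<subseteq> E"
    and El_conn: "\<forall>i<q. edge_connected_pair l V El (S i) (T i)"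
    and x_range: "\<forall>e\<in>E. 0 \<le> x e \<and> x e \<le> 1"
    and x_El: "\<forall>e\<in>El. x e = 1"
    and x_cut: "\<forall>i<q. \<forall>X. T i \<subseteq> X \<and> X \<subseteq> V - S i \<longrightarrow> sum x (dcut E X) \<ge> real l + 1"
    and beta: "\<beta> \<ge> 1"
    and D_emb: "\<forall>Tm\<in>set_pmf D. tree_embedding V E (xtilde E (card V) l \<beta> x) Tm"
    and D_load: "\<forall>e\<in>E. (\<integral>\<^sup>+ Tm. ennreal (load Tm e) \<partial>measure_pmf D)
                          \<le> ennreal (\<beta> * xtilde E (card V) l \<beta> x e)"
    and D_flow: "\<forall>Tm\<in>set_pmf D. \<forall>A B. A \<subseteq> V \<and> B \<subseteq> V \<and> A \<inter> B = {} \<longrightarrow>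
                   maxflow (tnodes Tm) (tedges Tm) (ty Tm)
                     {u \<in> leaves (tnodes Tm) (tedges Tm). tmap Tm u \<in> A}
                     {u \<in> leaves (tnodes Tm) (tedges Tm). tmap Tm u \<in> B}
                   \<ge> maxflow V E (xtilde E (card V) l \<beta> x) A B"
    and F_sub: "F \<subseteq> LARGE E l \<beta> x"
    and F_card: "card F = l"
  shows "measure_pmf.prob D {Tm. good Tm F} \<ge> 1/2"
  proof -
  define c where "c = xtilde E (card V) l \<beta> x"
  have c_nn: "\<forall>e. 0 \<le> c e" unfolding c_def
    using xtilde_nonneg x_range l_pos beta by blast
  define X where "X Tm = (\<Sum>f\<in>Minv Tm F. ty Tm f)" for Tm :: "('n,'v) temb"
  have finF: "finite F" by (rule card_ge_0_finite) (use F_card l_pos in linarith)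
  have sup: "X Tm \<le> (\<Sum>e\<in>F. load Tm e) \<and> 0 \<le> X Tm \<and> (\<forall>e. 0 \<le> load Tm e)"
    if "Tm \<in> set_pmf D" for Tm
  proof -
    have te: "tree_embedding V E c Tm" using D_emb that c_def by blast
    have "is_tree (tnodes Tm) (tedges Tm)" using te unfolding tree_embedding_def by (rule conjunct1)
    then have fin: "finite (tedges Tm)" by (rule tree_fin)
    have nn: "\<forall>f\<in>tedges Tm. 0 \<le> ty Tm f" using ty_nonneg[OF te c_nn] by blast
    have "X Tm \<le> (\<Sum>e\<in>F. load Tm e)"
      unfolding X_def load_def by (rule sum_Minv_le[OF finF fin nn])
    moreover have "0 \<le> X Tm" unfolding X_def using nn Minv_sub
      by (intro sum_nonneg) blast
    moreover have "\<forall>e. 0 \<le> load Tm e" unfolding load_def using nn Minv_sub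
      by (intro allI sum_nonneg) blast
    ultimately show ?thesis by blast
  qed
  have "(\<integral>\<^sup>+ Tm. ennreal (X Tm) \<partial>measure_pmf D)
         \<le> (\<integral>\<^sup>+ Tm. (\<Sum>e\<in>F. ennreal (load Tm e)) \<partial>measure_pmf D)"
  proof (rule nn_integral_mono_AE, rule AE_pmfI)
    fix Tm assume "Tm \<in> set_pmf D"
    from sup[OF this] show "ennreal (X Tm) \<le> (\<Sum>e\<in>F. ennreal (load Tm e))"
      by (simp add: ennreal_leI)
  qed
  also have "\<dots> = (\<Sum>e\<in>F. \<integral>\<^sup>+ Tm. ennreal (load Tm e) \<partial>measure_pmf D)"
    by (rule nn_integral_sum) simp
  also have "\<dots> \<le> (\<Sum>e\<in>F. ennreal (1 / (4 * real l)))"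
  proof (rule sum_mono)
    fix e assume eF: "e \<in> F"
    then have eE: "e \<in> E" and xe: "x e \<ge> 1 / (4 * real l * \<beta>)"
      using F_sub unfolding LARGE_def by auto
    have "\<beta> * xtilde E (card V) l \<beta> x e = 1 / (4 * real l)"
      using eE xe beta unfolding xtilde_def by simp
    then show "(\<integral>\<^sup>+ Tm. ennreal (load Tm e) \<partial>measure_pmf D) \<le> ennreal (1 / (4 * real l))"
      using D_load eE by metis
  qed
  also have "\<dots> = of_nat l * ennreal (1 / (4 * real l))"
    using F_card by simp
  also have "\<dots> = ennreal (real l * (1 / (4 * real l)))"
    by (subst ennreal_mult) (auto simp: ennreal_of_nat_eq_real_of_nat)
  also have "\<dots> = ennreal (1/4)" using l_pos by simp
  finally have intX: "(\<integral>\<^sup>+ Tm. ennreal (X Tm) \<partial>measure_pmf D) \<le> ennreal (1/4)" .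
  define A where "A = {Tm. X Tm > 1/2}"
  have "ennreal (1/2) * emeasure (measure_pmf D) A
      = (\<integral>\<^sup>+ Tm. ennreal (1/2) * indicator A Tm \<partial>measure_pmf D)"
    by (rule nn_integral_cmult_indicator[symmetric]) simp
  also have "\<dots> \<le> (\<integral>\<^sup>+ Tm. ennreal (X Tm) \<partial>measure_pmf D)"
  proof (rule nn_integral_mono_AE, rule AE_pmfI)
    fix Tm assume "Tm \<in> set_pmf D"
    from sup[OF this] show "ennreal (1/2) * indicator A Tm \<le> ennreal (X Tm)"
      unfolding A_def by (cases "X Tm > 1/2") (auto simp: indicator_def intro!: ennreal_leI simp del: ennreal_half)
  qed
  also note intX
  finally have "ennreal (1/2) * ennreal (measure_pmf.prob D A) \<le> ennreal (1/4)"
    by (simp only: measure_pmf.emeasure_eq_measure)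
  then have "ennreal (1/2 * measure_pmf.prob D A) \<le> ennreal (1/4)"
    by (simp only: ennreal_mult[symmetric, of "1/2" "measure_pmf.prob D A"] measure_nonneg)
  then have pA: "measure_pmf.prob D A \<le> 1/2"
    by (subst (asm) ennreal_le_iff) auto
  have "{Tm. good Tm F} = UNIV - A" unfolding A_def good_def X_def by auto
  then have "measure_pmf.prob D {Tm. good Tm F} = 1 - measure_pmf.prob D A"
    using measure_pmf.prob_compl[of A D] by simp
  then show ?thesis using pA by simp
qed

end
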